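(* Let $n\ge0$ and $i,j\in D$. Suppose that for $m=1,\dots,r$ we are given $a_m,b_m\in D$ with $\mathcal F_n(a_m)\subseteq\mathcal F_n(b_m)$, $A_i(a_m)=1$ and $A_j(b_m)=1$, and that $A_i(c)\le A_j(c)$ for all $c\notin\{a_m:m=1,\dots,r\}$. Then $\mathcal F_{n+1}(i)\subseteq\mathcal F_{n+1}(j)$.
   Context: Fix integers $k\ge1$, $d\ge1$, $K=\{1,\dots,k\}$, $D=\{1,\dots,d\}$. The $k$-tree is the set $K^*$ of finite words over $K$ with root the empty word $\epsilon$; $xg$ ($g\in K$) are the children of $x$. $L_n$ is the set of words of length exactly $n$ and $\Delta_n$ the set of words of length at most $n$. $A$ is a $d\times d$ matrix with entries in $\{0,1\}$, and $A_i(m)=A(i,m)$. A (valid) labeling of $\Delta_n$ is a map $\lambda:\Delta_n\to D$ with $A(\lambda(x),\lambda(xg))=1$ for all $x\in\Delta_{n-1}$, $g\in K$. The $n$-follower set of $a\in D$ is $\mathcal F_n(a)=\{\lambda|_{L_n}: \lambda \text{ a valid labeling of } \Delta_n \text{ with } \lambda(\epsilon)=a\}$. *)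

theory Defs
  imports Main "HOL-Library.FuncSet"
begin

text \<open>Alphabet K = {1..k}, label set D = {1..d}; words are lists over K,
  the children of x are x @ [g]; the root is the empty list.\<close>

definition words_len :: "nat \<Rightarrow> nat \<Rightarrow> nat list set"
  where "words_len k n = {x. length x = n \<and> set x \<subseteq> {1..k}}"

definition words_upto :: "nat \<Rightarrow> nat \<Rightarrow> nat list set"
  where "words_upto k n = {x. length x \<le> n \<and> set x \<subseteq> {1..k}}"

text \<open>A valid labeling of Delta_n (only its values on Delta_n matter).\<close>
definition valid_labeling ::
  "nat \<Rightarrow> nat \<Rightarrow> (nat \<Rightarrow> nat \<Rightarrow> nat) \<Rightarrow> nat \<Rightarrow> (nat list \<Rightarrow> nat) \<Rightarrow> bool"
  where "valid_labeling k d A n lam \<longleftrightarrow>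
     (\<forall>x \<in> words_upto k n. lam x \<in> {1..d}) \<and>
     (\<forall>x \<in> words_upto k n. length x < n \<longrightarrow>
        (\<forall>g \<in> {1..k}. A (lam x) (lam (x @ [g])) = 1))"

definition follower ::
  "nat \<Rightarrow> nat \<Rightarrow> (nat \<Rightarrow> nat \<Rightarrow> nat) \<Rightarrow> nat \<Rightarrow> nat \<Rightarrow> (nat list \<Rightarrow> nat) set"
  where "follower k d A n a =
     {restrict lam (words_len k n) | lam. valid_labeling k d A n lam \<and> lam [] = a}"

end

theory Submission
  imports Defs
begin

lemma sub_valid:
  assumes "valid_labeling k d A (Suc n) lam" "g \<in> {1..k}"
  shows "valid_labeling k d A n (\<lambda>x. lam (g # x))"
proof -
  have w: "x \<in> words_upto k n \<Longrightarrow> g # x \<in> words_upto k (Suc n)" for x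
    using assms(2) by (auto simp: words_upto_def)
  show ?thesis using assms(1) w unfolding valid_labeling_def
    by (metis Cons_eq_appendI Suc_less_eq length_Cons)
qed

theorem proposition3p8:
  fixes k d n r i j :: nat and A :: "nat \<Rightarrow> nat \<Rightarrow> nat" and a b :: "nat \<Rightarrow> nat"
  assumes "k \<ge> 1" and "d \<ge> 1"
    and "\<forall>x \<in> {1..d}. \<forall>y \<in> {1..d}. A x y \<in> {0, 1}"
    and "i \<in> {1..d}" and "j \<in> {1..d}"
    and "\<forall>m \<in> {1..r}. a m \<in> {1..d} \<and> b m \<in> {1..d}"
    and "\<forall>m \<in> {1..r}. follower k d A n (a m) \<subseteq> follower k d A n (b m)"
    and "\<forall>m \<in> {1..r}. A i (a m) = 1 \<and> A j (b m) = 1"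
    and "\<forall>c \<in> {1..d}. c \<notin> a ` {1..r} \<longrightarrow> A i c \<le> A j c"
  shows "follower k d A (n + 1) i \<subseteq> follower k d A (n + 1) j"
proof
  fix f assume "f \<in> follower k d A (n + 1) i"
  then obtain lam where lv: "valid_labeling k d A (Suc n) lam" and l0: "lam [] = i"
    and f: "f = restrict lam (words_len k (Suc n))"
    unfolding follower_def by auto
  have root: "lam [g] \<in> {1..d} \<and> A i (lam [g]) = 1" if "g \<in> {1..k}" for g
  proof -
    have "[] \<in> words_upto k (Suc n)" "[g] \<in> words_upto k (Suc n)"
      using that by (auto simp: words_upto_def)
    then show ?thesis using lv l0 that unfolding valid_labeling_def by fastforce
  qed
  define P where "P g mu \<longleftrightarrow> valid_labeling k d A n mu \<and> A j (mu []) = 1 \<and>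
      (\<forall>x\<in>words_len k n. mu x = lam (g # x))" for g mu
  have ex: "\<exists>mu. P g mu" if g: "g \<in> {1..k}" for g
  proof (cases "\<exists>m\<in>{1..r}. lam [g] = a m")
    case True
    then obtain m where m: "m \<in> {1..r}" "lam [g] = a m" by blast
    have "restrict (\<lambda>x. lam (g # x)) (words_len k n) \<in> follower k d A n (a m)"
      unfolding follower_def using sub_valid[OF lv g] m by auto
    then have "restrict (\<lambda>x. lam (g # x)) (words_len k n) \<in> follower k d A n (b m)"
      using assms(7) m by blast
    then obtain mu where "valid_labeling k d A n mu" "mu [] = b m"
      "restrict mu (words_len k n) = restrict (\<lambda>x. lam (g # x)) (words_len k n)"
      unfolding follower_def by auto
    then show ?thesis unfolding P_def using assms(8) m
      by (metis restrict_apply')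
  next
    case False
    then have "lam [g] \<notin> a ` {1..r}" by auto
    then have "A i (lam [g]) \<le> A j (lam [g])" using assms(9) root[OF g] by blast
    then have "A j (lam [g]) = 1" using root[OF g] assms(3) assms(5) by fastforce
    then show ?thesis unfolding P_def using sub_valid[OF lv g] by auto
  qed
  define M where "M g = (SOME mu. P g mu)" for g
  have M: "P g (M g)" if "g \<in> {1..k}" for g
    unfolding M_def using ex[OF that] by (rule someI_ex)
  define nu where "nu w = (case w of [] \<Rightarrow> j | g # x \<Rightarrow> M g x)" for w
  have "valid_labeling k d A (Suc n) nu"
    unfolding valid_labeling_def
  proof (intro conjI ballI impI)
    fix w assume w: "w \<in> words_upto k (Suc n)"
    show "nu w \<in> {1..d}"
    proof (cases w)
      case Nil then show ?thesis using assms(5) by (simp add: nu_def)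
    next
      case (Cons g x)
      then have "g \<in> {1..k}" "x \<in> words_upto k n" using w by (auto simp: words_upto_def)
      then show ?thesis using M unfolding P_def valid_labeling_def nu_def Cons by auto
    qed
  next
    fix w h assume w: "w \<in> words_upto k (Suc n)" and len: "length w < Suc n" and h: "h \<in> {1..k}"
    show "A (nu w) (nu (w @ [h])) = 1"
    proof (cases w)
      case Nil then show ?thesis using M[OF h] by (simp add: nu_def P_def)
    next
      case (Cons g x)
      then have "g \<in> {1..k}" "x \<in> words_upto k n" "length x < n"
        using w len by (auto simp: words_upto_def)
      then show ?thesis using M h unfolding P_def valid_labeling_def nu_def Cons by auto
    qed
  qed
  moreover have "restrict nu (words_len k (Suc n)) = f"
    unfolding f
  proof (rule restrict_ext)
    fix w assume w: "w \<in> words_len k (Suc n)"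
    then obtain g x where wx: "w = g # x" by (cases w) (auto simp: words_len_def)
    then have "g \<in> {1..k}" "x \<in> words_len k n" using w by (auto simp: words_len_def)
    then show "nu w = lam w" using M unfolding P_def nu_def wx by auto
  qed
  ultimately show "f \<in> follower k d A (n + 1) j"
    unfolding follower_def by (auto simp: nu_def)
qed

end
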